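(* Let $S$ be a topological semigroup and $e\in S$ a balanced open right unit of $S$. Then $S$ has open left shifts and open right shifts. If moreover $S$ is a $T_1$-space, then $e$ is an open left unit of $S$ (in particular $e$ is a unit and $S$ is a balanced topological monoid).
   Context: A topological semigroup is a topological space with a continuous associative multiplication. $e$ is a right unit if $xe=x$ for all $x\in S$, a left unit if $ex=x$ for all $x$, a unit if both. A right unit $e$ is an open right unit if $xU$ is a neighborhood of $x$ for every neighborhood $U$ of $e$ and every $x\in S$; a left unit is an open left unit if $Ux$ is a neighborhood of $x$ for every such $U$ and $x$. A subset $U\subset S$ is invariant if $xU=Ux$ for all $x\in S$. A point $e$ is balanced if it has a neighborhood base consisting of open invariant neighborhoods; a balanced open right unit is an open right unit which is a balanced point. A topological monoid (semigroup with unit) is balanced if its unit is a balanced point. $S$ has open left (right) shifts if $x\mapsto ax$ (resp. $x\mapsto xa$) is an open map for every $a\in S$. *)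

theory Defs
  imports Complex_Main
begin

definition topological_semigroup :: "'a::{topological_space, semigroup_mult} itself \<Rightarrow> bool" where
  "topological_semigroup _ \<longleftrightarrow> continuous_on (UNIV :: ('a \<times> 'a) set) (\<lambda>p. fst p * snd p)"

definition nhd :: "'a::topological_space set \<Rightarrow> 'a \<Rightarrow> bool" where
  "nhd U x \<longleftrightarrow> (\<exists>V. open V \<and> x \<in> V \<and> V \<subseteq> U)"

definition right_unit :: "'a::semigroup_mult \<Rightarrow> bool" where
  "right_unit e \<longleftrightarrow> (\<forall>x. x * e = x)"

definition left_unit :: "'a::semigroup_mult \<Rightarrow> bool" where
  "left_unit e \<longleftrightarrow> (\<forall>x. e * x = x)"

definition is_unit :: "'a::semigroup_mult \<Rightarrow> bool" where
  "is_unit e \<longleftrightarrow> left_unit e \<and> right_unit e"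

definition open_right_unit :: "'a::{topological_space, semigroup_mult} \<Rightarrow> bool" where
  "open_right_unit e \<longleftrightarrow> right_unit e \<and>
     (\<forall>U x. nhd U e \<longrightarrow> nhd ((\<lambda>u. x * u) ` U) x)"

definition open_left_unit :: "'a::{topological_space, semigroup_mult} \<Rightarrow> bool" where
  "open_left_unit e \<longleftrightarrow> left_unit e \<and>
     (\<forall>U x. nhd U e \<longrightarrow> nhd ((\<lambda>u. u * x) ` U) x)"

definition invariant :: "'a::semigroup_mult set \<Rightarrow> bool" where
  "invariant U \<longleftrightarrow> (\<forall>x. (\<lambda>u. x * u) ` U = (\<lambda>u. u * x) ` U)"

definition balanced_point :: "'a::{topological_space, semigroup_mult} \<Rightarrow> bool" where
  "balanced_point e \<longleftrightarrow>
     (\<forall>W. nhd W e \<longrightarrow> (\<exists>U. open U \<and> e \<in> U \<and> invariant U \<and> U \<subseteq> W))"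

definition open_left_shifts :: "'a::{topological_space, semigroup_mult} itself \<Rightarrow> bool" where
  "open_left_shifts _ \<longleftrightarrow> (\<forall>(a::'a) U. open U \<longrightarrow> open ((\<lambda>x. a * x) ` U))"

definition open_right_shifts :: "'a::{topological_space, semigroup_mult} itself \<Rightarrow> bool" where
  "open_right_shifts _ \<longleftrightarrow> (\<forall>(a::'a) U. open U \<longrightarrow> open ((\<lambda>x. x * a) ` U))"

end

theory Submission
  imports Defs
begin

lemma lcont:
  assumes "topological_semigroup TYPE('a::{topological_space, semigroup_mult})"
  shows "continuous_on UNIV (\<lambda>t::'a. x * t)"
proof -
  have "continuous_on UNIV ((\<lambda>p::'a\<times>'a. fst p * snd p) \<circ> (\<lambda>t. (x, t)))"
    apply (rule continuous_on_compose)
     apply (intro continuous_on_Pair continuous_on_const continuous_on_id)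
    using assms unfolding topological_semigroup_def
    by (metis continuous_on_subset top_greatest)
  then show ?thesis by (simp add: o_def)
qed

lemma getV:
  fixes e :: "'a::{topological_space, semigroup_mult}"
  assumes "topological_semigroup TYPE('a)" "open_right_unit e" "balanced_point e"
    and "open U" "u \<in> U"
  shows "\<exists>V. open V \<and> e \<in> V \<and> invariant V \<and> (\<lambda>t. u * t) ` V \<subseteq> U"
proof -
  have o: "open ((\<lambda>t. u * t) -` U)"
    using open_vimage[OF assms(4) lcont[OF assms(1)]] .
  have "u * e = u" using assms(2) by (simp add: open_right_unit_def right_unit_def)
  then have "e \<in> (\<lambda>t. u * t) -` U" using assms(5) by simp
  then have "nhd ((\<lambda>t. u * t) -` U) e" using o unfolding nhd_def by blast
  then obtain V where "open V" "e \<in> V" "invariant V" "V \<subseteq> (\<lambda>t. u * t) -` U"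
    using assms(3) unfolding balanced_point_def by blast
  then show ?thesis by blast
qed

lemma nhd_mono: "nhd A x \<Longrightarrow> A \<subseteq> B \<Longrightarrow> nhd B x"
  unfolding nhd_def by blast

lemma open_nhds: "(\<And>y. y \<in> U \<Longrightarrow> nhd U y) \<Longrightarrow> open U"
  unfolding nhd_def by (metis open_subopen)

theorem proposition5p7:
  fixes e :: "'a::{topological_space, semigroup_mult}"
  assumes "topological_semigroup TYPE('a)"
    and "open_right_unit e"
    and "balanced_point e"
  shows "open_left_shifts TYPE('a) \<and> open_right_shifts TYPE('a) \<and>
         ((\<forall>x y::'a. x \<noteq> y \<longrightarrow> (\<exists>U. open U \<and> x \<in> U \<and> y \<notin> U)) \<longrightarrow>
           open_left_unit e \<and> is_unit e)"
proof (intro conjI impI)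
  have oru: "\<And>U x. nhd U e \<Longrightarrow> nhd ((\<lambda>u. x * u) ` U) x"
    using assms(2) unfolding open_right_unit_def by blast
  have nV: "\<And>V. open V \<Longrightarrow> e \<in> V \<Longrightarrow> nhd V e" unfolding nhd_def by blast
  show "open_left_shifts TYPE('a)"
    unfolding open_left_shifts_def
  proof (intro allI impI)
    fix a :: 'a and U :: "'a set" assume U: "open U"
    show "open ((\<lambda>x. a * x) ` U)"
    proof (rule open_nhds)
      fix y assume "y \<in> (\<lambda>x. a * x) ` U"
      then obtain u where u: "u \<in> U" "y = a * u" by blast
      obtain V where V: "open V" "e \<in> V" "(\<lambda>t. u * t) ` V \<subseteq> U"
        using getV[OF assms U u(1)] by blast
      have "nhd ((\<lambda>t. (a*u) * t) ` V) (a*u)" using oru nV V by blast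
      moreover have "(\<lambda>t. (a*u) * t) ` V \<subseteq> (\<lambda>x. a * x) ` U"
        using V(3) by (auto simp: mult.assoc)
      ultimately show "nhd ((\<lambda>x. a * x) ` U) y" using u nhd_mono by blast
    qed
  qed
  show "open_right_shifts TYPE('a)"
    unfolding open_right_shifts_def
  proof (intro allI impI)
    fix a :: 'a and U :: "'a set" assume U: "open U"
    show "open ((\<lambda>x. x * a) ` U)"
    proof (rule open_nhds)
      fix y assume "y \<in> (\<lambda>x. x * a) ` U"
      then obtain u where u: "u \<in> U" "y = u * a" by blast
      obtain V where V: "open V" "e \<in> V" "invariant V" "(\<lambda>t. u * t) ` V \<subseteq> U"
        using getV[OF assms U u(1)] by blast
      have "nhd ((\<lambda>t. (u*a) * t) ` V) (u*a)" using oru nV V by blast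
      moreover have "(\<lambda>t. (u*a) * t) ` V \<subseteq> (\<lambda>x. x * a) ` U"
      proof
        fix z assume "z \<in> (\<lambda>t. (u*a) * t) ` V"
        then obtain v where v: "v \<in> V" "z = u * (a * v)" by (auto simp: mult.assoc)
        have "a * v \<in> (\<lambda>t. t * a) ` V" using V(3) v(1) unfolding invariant_def by blast
        then obtain w where w: "w \<in> V" "a * v = w * a" by blast
        have "z = (u * w) * a" using v w by (simp add: mult.assoc)
        moreover have "u * w \<in> U" using V(4) w(1) by blast
        ultimately show "z \<in> (\<lambda>x. x * a) ` U" by blast
      qed
      ultimately show "nhd ((\<lambda>x. x * a) ` U) y" using u nhd_mono by blast
    qed
  qed
  assume T1: "\<forall>x y::'a. x \<noteq> y \<longrightarrow> (\<exists>U. open U \<and> x \<in> U \<and> y \<notin> U)"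
  have ru: "right_unit e" using assms(2) unfolding open_right_unit_def by blast
  have lu: "left_unit e"
    unfolding left_unit_def
  proof
    fix x
    show "e * x = x"
    proof (rule ccontr)
      assume "e * x \<noteq> x"
      then obtain U where U: "open U" "x \<in> U" "e * x \<notin> U" using T1 by metis
      obtain V where V: "open V" "e \<in> V" "invariant V" "(\<lambda>t. x * t) ` V \<subseteq> U"
        using getV[OF assms U(1,2)] by blast
      have "e * x \<in> (\<lambda>t. t * x) ` V" using V(2) by blast
      then have "e * x \<in> (\<lambda>t. x * t) ` V" using V(3) unfolding invariant_def by metis
      then show False using V(4) U(3) by blast
    qed
  qed
  show "is_unit e" using lu ru unfolding is_unit_def by blast
  show "open_left_unit e"
    unfolding open_left_unit_def
  proof (intro conjI lu allI impI)
    fix U x assume "nhd U e"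
    then obtain V where V: "open V" "e \<in> V" "invariant V" "V \<subseteq> U"
      using assms(3) unfolding balanced_point_def by blast
    have "nhd ((\<lambda>u. x * u) ` V) x" using oru nV V by blast
    moreover have "(\<lambda>u. x * u) ` V = (\<lambda>u. u * x) ` V" using V(3) unfolding invariant_def by blast
    ultimately show "nhd ((\<lambda>u. u * x) ` U) x" using V(4) nhd_mono by (metis image_mono)
  qed
qed

end
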